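(* Let $\rho\in\mathbb N\cup\{\infty\}$ and let $D$ be a Van Kampen diagram over $X_\rho$ all of whose clusters are simply connected, non-complicated, and standardly filled. Then $\|D_{\mathrm{thick}}\|_\infty\le 6\,\mathrm{Area}(D)$.
   Context: Setting. $G=\langle S\mid\mathcal R\rangle$ is a finite presentation with $S$ finite symmetric and relators of length 2 or 3. $H_1,\dots,H_n\le G$, and $S_i\subset S$ is a finite symmetric generating set of $H_i$. Truncated relative presentation. For $\rho\in\mathbb N\cup\{\infty\}$, $\tilde H_i=\langle\tilde S_i\mid$ words of length $\le\rho$ over $S_i$ trivial in $H_i\rangle$, with $\tilde S_i$ a copy of $S_i$ and natural epimorphism $p_i$. Put $\hat S=S\sqcup\tilde H_1\sqcup\dots\sqcup\tilde H_n$, each element of $\tilde H_i$ being a letter. $X_\rho$ is the presentation of $G$ with generators $\hat S$ and relators: - $\mathcal R'$, consisting of $\mathcal R$ together with the words $\tilde s^{-1}p_i(\tilde s)$ for $\tilde s\in\tilde S_i$; - for each $i$, all words of at most 3 letters of $\tilde H_i$ with trivial product in $\tilde H_i$. Complexity. $\|s\|=1$ for $s\in S$. For $a\in\tilde H_i$, $\|a\|$ is the word length with respect to $\tilde S_i$. $\|\cdot\|_\infty$ of a subcomplex is the maximum edge-label complexity. $\mathrm{Area}(D)$ is the number of 2-cells. $D_{\mathrm{thick}}$ is the union of all 2-cells of $D$ and of all edges and vertices contained in the boundary of some 2-cell. Clusters. 2-cells have type $\mathcal R'$ or $\tilde H_i$ according to their relator. Cells of the same type $\tilde H_i$ sharing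 an edge are cluster-adjacent. A cluster is the closure of a class of the transitive closure of this relation. $\partial C$ is the union of the edges of $C$ lying in exactly one 2-cell of $C$. A cluster $C$ is complicated if $\partial C\cap\partial D$ contains at least two edges. A simply connected cluster with boundary labeled cyclically $a_1,\dots,a_m$ is standardly filled if it is the fan triangulation with $m-2$ triangles, all vertices on $\partial C$, and interior edges labeled by $a_1\cdots a_j\in\tilde H_i$ for $j\le m-2$. *)

theory Defs
  imports "HOL-Algebra.Algebra" "HOL-Library.Extended_Nat"
begin

text \<open>A signed word: a letter together with True (the letter) or False (its formal inverse).\<close>
type_synonym 'a sword = "('a \<times> bool) list"

definition pos_word :: "'a list \<Rightarrow> 'a sword" where
  "pos_word w = map (\<lambda>x. (x, True)) w"

definition inv_sw :: "'a sword \<Rightarrow> 'a sword" where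
  "inv_sw w = rev (map (\<lambda>(x,b). (x, \<not> b)) w)"

inductive_set pres_step :: "'a set \<Rightarrow> 'a sword set \<Rightarrow> ('a sword \<times> 'a sword) set"
  for A :: "'a set" and Rs :: "'a sword set" where
  cancel: "x \<in> A \<Longrightarrow> (u @ [(x,b),(x,\<not>b)] @ v, u @ v) \<in> pres_step A Rs"
| relator: "r \<in> Rs \<Longrightarrow> (u @ r @ v, u @ v) \<in> pres_step A Rs"
| relator_inv: "r \<in> Rs \<Longrightarrow> (u @ inv_sw r @ v, u @ v) \<in> pres_step A Rs"

definition pres_eq :: "'a set \<Rightarrow> 'a sword set \<Rightarrow> ('a sword \<times> 'a sword) set" where
  "pres_eq A Rs = {(u,v). u \<in> lists (A \<times> UNIV) \<and> v \<in> lists (A \<times> UNIV) \<and>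
      (u,v) \<in> (pres_step A Rs \<union> (pres_step A Rs)\<inverse>)\<^sup>*}"

definition sw_prod :: "('g, 'b) monoid_scheme \<Rightarrow> 'g sword \<Rightarrow> 'g" where
  "sw_prod G w = foldr (\<lambda>(x,b) y. (if b then x else inv\<^bsub>G\<^esub> x) \<otimes>\<^bsub>G\<^esub> y) w \<one>\<^bsub>G\<^esub>"

definition sym_subset :: "('g, 'b) monoid_scheme \<Rightarrow> 'g set \<Rightarrow> bool" where
  "sym_subset G A \<longleftrightarrow> (\<forall>x\<in>A. inv\<^bsub>G\<^esub> x \<in> A)"

definition finite_presentation :: "('g, 'b) monoid_scheme \<Rightarrow> 'g set \<Rightarrow> 'g list set \<Rightarrow> bool" where
  "finite_presentation G S R \<longleftrightarrow>
     group G \<and> finite S \<and> S \<subseteq> carrier G \<and> sym_subset G S \<and> finite R \<and>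
     (\<forall>r\<in>R. set r \<subseteq> S \<and> (length r = 2 \<or> length r = 3) \<and> sw_prod G (pos_word r) = \<one>\<^bsub>G\<^esub>) \<and>
     generate G S = carrier G \<and>
     (\<forall>w\<in>lists (S \<times> UNIV). sw_prod G w = \<one>\<^bsub>G\<^esub> \<longrightarrow> (w, []) \<in> pres_eq S (pos_word ` R))"

text \<open>Relators of \<open>\<tilde>H_i\<close>: words of length at most rho over \<open>S_i\<close> trivial in \<open>H_i\<close> (i.e. in G).
  The generator \<open>\<tilde>s\<close> of \<open>\<tilde>H_i\<close> is represented by s itself.\<close>
definition tRel :: "('g, 'b) monoid_scheme \<Rightarrow> (nat \<Rightarrow> 'g set) \<Rightarrow> enat \<Rightarrow> nat \<Rightarrow> 'g sword set" where
  "tRel G Ss rho i = {pos_word w | w. w \<in> lists (Ss i) \<and> enat (length w) \<le> rho \<and>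
                                   sw_prod G (pos_word w) = \<one>\<^bsub>G\<^esub>}"

definition tEq :: "('g, 'b) monoid_scheme \<Rightarrow> (nat \<Rightarrow> 'g set) \<Rightarrow> enat \<Rightarrow> nat \<Rightarrow> ('g sword \<times> 'g sword) set" where
  "tEq G Ss rho i = pres_eq (Ss i) (tRel G Ss rho i)"

text \<open>Elements of \<open>\<tilde>H_i\<close> are equivalence classes of signed words over \<open>\<tilde>S_i\<close>.\<close>
definition tcarrier :: "('g, 'b) monoid_scheme \<Rightarrow> (nat \<Rightarrow> 'g set) \<Rightarrow> enat \<Rightarrow> nat \<Rightarrow> 'g sword set set" where
  "tcarrier G Ss rho i = lists (Ss i \<times> UNIV) // tEq G Ss rho i"

definition tclass :: "('g, 'b) monoid_scheme \<Rightarrow> (nat \<Rightarrow> 'g set) \<Rightarrow> enat \<Rightarrow> nat \<Rightarrow> 'g sword \<Rightarrow> 'g sword set" where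
  "tclass G Ss rho i w = tEq G Ss rho i `` {w}"

definition tprod :: "('g, 'b) monoid_scheme \<Rightarrow> (nat \<Rightarrow> 'g set) \<Rightarrow> enat \<Rightarrow> nat \<Rightarrow> 'g sword set list \<Rightarrow> 'g sword set" where
  "tprod G Ss rho i as = tEq G Ss rho i `` {concat ws | ws. list_all2 (\<in>) ws as}"

definition tinv :: "'g sword set \<Rightarrow> 'g sword set" where
  "tinv a = inv_sw ` a"

definition tlen :: "'g sword set \<Rightarrow> nat" where
  "tlen a = (LEAST k. \<exists>w\<in>a. length w = k)"

text \<open>Letters of \<open>\<hat>S\<close>: SL s for s in S, HL i a for a in \<open>\<tilde>H_i\<close>.\<close>
datatype 'g hletter = SL 'g | HL nat "'g sword set"

definition Shat :: "('g, 'b) monoid_scheme \<Rightarrow> 'g set \<Rightarrow> (nat \<Rightarrow> 'g set) \<Rightarrow> enat \<Rightarrow> nat \<Rightarrow> 'g hletter set" where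
  "Shat G S Ss rho n = SL ` S \<union> {HL i a | i a. i \<in> {1..n} \<and> a \<in> tcarrier G Ss rho i}"

definition cx :: "'g hletter \<Rightarrow> nat" where
  "cx x = (case x of SL s \<Rightarrow> 1 | HL i a \<Rightarrow> tlen a)"

definition Rprime :: "('g, 'b) monoid_scheme \<Rightarrow> 'g list set \<Rightarrow> (nat \<Rightarrow> 'g set) \<Rightarrow> enat \<Rightarrow> nat \<Rightarrow> 'g hletter list set" where
  "Rprime G R Ss rho n = {map SL r | r. r \<in> R} \<union>
     {[HL i (tclass G Ss rho i [(s, False)]), SL s] | i s. i \<in> {1..n} \<and> s \<in> Ss i}"

definition HRel :: "('g, 'b) monoid_scheme \<Rightarrow> (nat \<Rightarrow> 'g set) \<Rightarrow> enat \<Rightarrow> nat \<Rightarrow> 'g hletter list set" where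
  "HRel G Ss rho i = {map (HL i) as | as. 1 \<le> length as \<and> length as \<le> 3 \<and>
      set as \<subseteq> tcarrier G Ss rho i \<and> tprod G Ss rho i as = tclass G Ss rho i []}"

definition XRel :: "('g, 'b) monoid_scheme \<Rightarrow> 'g list set \<Rightarrow> (nat \<Rightarrow> 'g set) \<Rightarrow> enat \<Rightarrow> nat \<Rightarrow> 'g hletter list set" where
  "XRel G R Ss rho n = Rprime G R Ss rho n \<union> (\<Union>i\<in>{1..n}. HRel G Ss rho i)"

text \<open>Darts (oriented edges), the edge involution alph, the vertex rotation sigm, labels
  (letter, orientation sign) and the outer face.\<close>
record ('d, 'g) vkdiag =
  darts :: "'d set"
  alph :: "'d \<Rightarrow> 'd"
  sigm :: "'d \<Rightarrow> 'd"
  dlab :: "'d \<Rightarrow> 'g hletter \<times> bool"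
  outer :: "'d set"

definition dorb :: "('d \<Rightarrow> 'd) \<Rightarrow> 'd \<Rightarrow> 'd set" where
  "dorb f d = {(f ^^ k) d | k. True}"

definition phi :: "('d, 'g) vkdiag \<Rightarrow> 'd \<Rightarrow> 'd" where
  "phi D d = sigm D (alph D d)"

definition dvertices :: "('d, 'g) vkdiag \<Rightarrow> 'd set set" where
  "dvertices D = {dorb (sigm D) d | d. d \<in> darts D}"

definition dedges :: "('d, 'g) vkdiag \<Rightarrow> 'd set set" where
  "dedges D = {{d, alph D d} | d. d \<in> darts D}"

definition dfaces :: "('d, 'g) vkdiag \<Rightarrow> 'd set set" where
  "dfaces D = {dorb (phi D) d | d. d \<in> darts D}"

definition cells :: "('d, 'g) vkdiag \<Rightarrow> 'd set set" where
  "cells D = dfaces D - {outer D}"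

text \<open>Connected genus-0 combinatorial map (or the one-vertex diagram), with a designated outer face.\<close>
definition planar_map :: "('d, 'g) vkdiag \<Rightarrow> bool" where
  "planar_map D \<longleftrightarrow> finite (darts D) \<and>
     (\<forall>d\<in>darts D. alph D d \<in> darts D \<and> alph D d \<noteq> d \<and> alph D (alph D d) = d) \<and>
     bij_betw (sigm D) (darts D) (darts D) \<and>
     (\<forall>d\<in>darts D. \<forall>e\<in>darts D.
        (d, e) \<in> ({(x, alph D x) | x. x \<in> darts D} \<union> {(x, sigm D x) | x. x \<in> darts D})\<^sup>*) \<and>
     ((darts D = {} \<and> outer D = {}) \<or>
      (outer D \<in> dfaces D \<and> card (dvertices D) + card (dfaces D) = card (dedges D) + 2))"

definition fword :: "('d, 'g) vkdiag \<Rightarrow> 'd \<Rightarrow> ('g hletter \<times> bool) list" where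
  "fword D d = map (\<lambda>k. dlab D ((phi D ^^ k) d)) [0..<card (dorb (phi D) d)]"

definition reads :: "('d, 'g) vkdiag \<Rightarrow> 'd set \<Rightarrow> 'g hletter list \<Rightarrow> bool" where
  "reads D c r \<longleftrightarrow> (\<exists>d\<in>c. fword D d = pos_word r \<or> fword D d = inv_sw (pos_word r))"

definition vk_diagram :: "('g, 'b) monoid_scheme \<Rightarrow> 'g set \<Rightarrow> 'g list set \<Rightarrow> (nat \<Rightarrow> 'g set)
      \<Rightarrow> enat \<Rightarrow> nat \<Rightarrow> ('d, 'g) vkdiag \<Rightarrow> bool" where
  "vk_diagram G S R Ss rho n D \<longleftrightarrow> planar_map D \<and>
     (\<forall>d\<in>darts D. fst (dlab D d) \<in> Shat G S Ss rho n \<and>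
                  dlab D (alph D d) = (fst (dlab D d), \<not> snd (dlab D d))) \<and>
     (\<forall>c\<in>cells D. \<exists>r\<in>XRel G R Ss rho n. reads D c r)"

definition vk_area :: "('d, 'g) vkdiag \<Rightarrow> nat" where
  "vk_area D = card (cells D)"

text \<open>Maximal complexity of an edge label in \<open>D_thick\<close> (edges in the boundary of some 2-cell).\<close>
definition thick_norm :: "('d, 'g) vkdiag \<Rightarrow> nat" where
  "thick_norm D = Max (insert 0 {cx (fst (dlab D d)) | d. d \<in> darts D \<and> {d, alph D d} \<inter> \<Union>(cells D) \<noteq> {}})"

definition bdD :: "('d, 'g) vkdiag \<Rightarrow> 'd set set" where
  "bdD D = {e \<in> dedges D. e \<inter> outer D \<noteq> {}}"

definition htype :: "('g, 'b) monoid_scheme \<Rightarrow> (nat \<Rightarrow> 'g set) \<Rightarrow> enat \<Rightarrow> ('d, 'g) vkdiag \<Rightarrow> nat \<Rightarrow> 'd set \<Rightarrow> bool" where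
  "htype G Ss rho D i c \<longleftrightarrow> (\<exists>r\<in>HRel G Ss rho i. reads D c r)"

definition cadj :: "('g, 'b) monoid_scheme \<Rightarrow> (nat \<Rightarrow> 'g set) \<Rightarrow> enat \<Rightarrow> ('d, 'g) vkdiag \<Rightarrow> nat \<Rightarrow> ('d set \<times> 'd set) set" where
  "cadj G Ss rho D i = {(c, c'). c \<in> cells D \<and> c' \<in> cells D \<and> htype G Ss rho D i c \<and> htype G Ss rho D i c' \<and>
       (\<exists>e\<in>dedges D. e \<inter> c \<noteq> {} \<and> e \<inter> c' \<noteq> {})}"

text \<open>Clusters of type \<open>\<tilde>H_i\<close>, represented by their sets of 2-cells.\<close>
definition clusters :: "('g, 'b) monoid_scheme \<Rightarrow> (nat \<Rightarrow> 'g set) \<Rightarrow> enat \<Rightarrow> ('d, 'g) vkdiag \<Rightarrow> nat \<Rightarrow> 'd set set set" where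
  "clusters G Ss rho D i = {{c'. (c, c') \<in> (cadj G Ss rho D i)\<^sup>*} | c. c \<in> cells D \<and> htype G Ss rho D i c}"

definition bdC :: "('d, 'g) vkdiag \<Rightarrow> 'd set set \<Rightarrow> 'd set set" where
  "bdC D C = {e \<in> dedges D. card {c \<in> C. e \<inter> c \<noteq> {}} = 1}"

definition complicated :: "('d, 'g) vkdiag \<Rightarrow> 'd set set \<Rightarrow> bool" where
  "complicated D C \<longleftrightarrow> 2 \<le> card (bdC D C \<inter> bdD D)"

text \<open>Simple connectivity of (the closure of) a cluster: Euler characteristic V - E + F = 1
  (the closure is connected by construction, and is a subcomplex of a planar contractible complex).\<close>
definition simply_conn :: "('d, 'g) vkdiag \<Rightarrow> 'd set set \<Rightarrow> bool" where
  "simply_conn D C \<longleftrightarrow>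
     card {v \<in> dvertices D. v \<inter> \<Union>C \<noteq> {}} + card C = card {e \<in> dedges D. e \<inter> \<Union>C \<noteq> {}} + 1"

definition hval :: "('d, 'g) vkdiag \<Rightarrow> 'd \<Rightarrow> 'g sword set" where
  "hval D d = (case fst (dlab D d) of HL j a \<Rightarrow> (if snd (dlab D d) then a else tinv a) | SL s \<Rightarrow> {})"

text \<open>Standard filling: boundary darts b 1 .. b m (a closed walk from vertex v0), fan triangles
  f 1 .. f (m-2), the k-th with boundary walk (v0 -> v_k -> v_(k+1) -> v0), diagonals t j from v0
  to v_j reading \<open>a_1 \<dots> a_j\<close>.\<close>
definition standardly_filled :: "('g, 'b) monoid_scheme \<Rightarrow> (nat \<Rightarrow> 'g set) \<Rightarrow> enat \<Rightarrow> ('d, 'g) vkdiag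
      \<Rightarrow> nat \<Rightarrow> 'd set set \<Rightarrow> bool" where
  "standardly_filled G Ss rho D i C \<longleftrightarrow>
    (\<exists>m b t f. 3 \<le> m \<and> inj_on f {1..m-2} \<and> C = f ` {1..m-2} \<and>
      (\<forall>k\<in>{1..m}. b k \<in> darts D) \<and>
      (\<forall>j\<in>{2..m-2}. t j \<in> darts D \<and>
          hval D (t j) = tprod G Ss rho i (map (\<lambda>k. hval D (b k)) [1..<j+1])) \<and>
      (\<forall>k\<in>{1..m-2}.
         let ein = (if k = 1 then b 1 else t k);
             eout = (if k = m - 2 then b m else alph D (t (k+1)))
         in card (f k) = 3 \<and> f k = dorb (phi D) ein \<and>
            phi D ein = b (k+1) \<and> phi D (b (k+1)) = eout \<and> phi D eout = ein) \<and>
      {{b k, alph D (b k)} | k. k \<in> {1..m}} = bdC D C)"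

end

theory Submission
  imports Defs
begin

lemma step_cong:
  assumes "(x,y) \<in> pres_step A Rs" shows "(p@x@q, p@y@q) \<in> pres_step A Rs"
  using assms
proof cases
  case (cancel z u b v)
  then show ?thesis using pres_step.cancel[of z A "p@u" b "v@q" Rs] by simp
next
  case (relator r u v)
  then show ?thesis using pres_step.relator[of r Rs "p@u" "v@q" A] by simp
next
  case (relator_inv r u v)
  then show ?thesis using pres_step.relator_inv[of r Rs "p@u" "v@q" A] by simp
qed

lemma rt_cong:
  assumes "(x,y) \<in> (pres_step A Rs \<union> (pres_step A Rs)\<inverse>)\<^sup>*"
  shows "(p@x@q, p@y@q) \<in> (pres_step A Rs \<union> (pres_step A Rs)\<inverse>)\<^sup>*"
  using assms
proof induction
  case base then show ?case by simp
next
  case (step y z)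
  then have "(p@y@q, p@z@q) \<in> pres_step A Rs \<union> (pres_step A Rs)\<inverse>"
    using step_cong by blast
  then show ?case using step.IH by (meson rtrancl.rtrancl_into_rtrancl)
qed

lemma peq_refl: "u \<in> lists (A \<times> UNIV) \<Longrightarrow> (u,u) \<in> pres_eq A Rs"
  by (simp add: pres_eq_def)
lemma peq_lists: "(u,v) \<in> pres_eq A Rs \<Longrightarrow> u \<in> lists (A \<times> UNIV) \<and> v \<in> lists (A \<times> UNIV)"
  by (simp add: pres_eq_def)
lemma peq_sym: "(u,v) \<in> pres_eq A Rs \<Longrightarrow> (v,u) \<in> pres_eq A Rs"
proof -
  assume a: "(u,v) \<in> pres_eq A Rs"
  have "(v,u) \<in> ((pres_step A Rs \<union> (pres_step A Rs)\<inverse>)\<^sup>*)\<inverse>"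
    using a by (simp add: pres_eq_def)
  then have "(v,u) \<in> ((pres_step A Rs \<union> (pres_step A Rs)\<inverse>)\<inverse>)\<^sup>*"
    by (simp add: rtrancl_converse)
  moreover have "(pres_step A Rs \<union> (pres_step A Rs)\<inverse>)\<inverse> = pres_step A Rs \<union> (pres_step A Rs)\<inverse>"
    by (simp add: converse_Un Un_commute)
  ultimately show ?thesis using a by (simp add: pres_eq_def)
qed
lemma peq_trans: "(u,v) \<in> pres_eq A Rs \<Longrightarrow> (v,w) \<in> pres_eq A Rs \<Longrightarrow> (u,w) \<in> pres_eq A Rs"
  unfolding pres_eq_def by auto
lemma peq_cong: "(u,v) \<in> pres_eq A Rs \<Longrightarrow> p \<in> lists (A \<times> UNIV) \<Longrightarrow> q \<in> lists (A \<times> UNIV)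
   \<Longrightarrow> (p@u@q, p@v@q) \<in> pres_eq A Rs"
  unfolding pres_eq_def using rt_cong by auto
lemma peq_congL: "(u,v) \<in> pres_eq A Rs \<Longrightarrow> p \<in> lists (A \<times> UNIV)
   \<Longrightarrow> (p@u, p@v) \<in> pres_eq A Rs"
  using peq_cong[of u v A Rs p "[]"] by simp
lemma peq_congR: "(u,v) \<in> pres_eq A Rs \<Longrightarrow> q \<in> lists (A \<times> UNIV)
   \<Longrightarrow> (u@q, v@q) \<in> pres_eq A Rs"
  using peq_cong[of u v A Rs "[]" q] by simp
lemma peq_app: "(u,v) \<in> pres_eq A Rs \<Longrightarrow> (u',v') \<in> pres_eq A Rs
   \<Longrightarrow> (u@u', v@v') \<in> pres_eq A Rs"
  by (meson peq_congL peq_congR peq_lists peq_trans)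

lemma inv_sw_Cons: "inv_sw (x#w) = inv_sw w @ [(fst x, \<not> snd x)]"
  by (cases x) (simp add: inv_sw_def)
lemma inv_sw_app: "inv_sw (u@v) = inv_sw v @ inv_sw u"
  by (simp add: inv_sw_def)
lemma inv_sw_inv[simp]: "inv_sw (inv_sw w) = w"
  by (induct w) (auto simp: inv_sw_def)
lemma inv_sw_nil[simp]: "inv_sw [] = []" by (simp add: inv_sw_def)
lemma inv_sw_len[simp]: "length (inv_sw w) = length w" by (simp add: inv_sw_def)
lemma inv_sw_lists: "w \<in> lists (A \<times> UNIV) \<Longrightarrow> inv_sw w \<in> lists (A \<times> UNIV)"
  by (induct w) (auto simp: inv_sw_Cons)

lemma peq_cancel: "w \<in> lists (A \<times> UNIV) \<Longrightarrow> (w @ inv_sw w, []) \<in> pres_eq A Rs"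
proof (induct w)
  case Nil then show ?case by (simp add: peq_refl)
next
  case (Cons x w)
  obtain a b where x: "x = (a,b)" by (cases x)
  have a: "a \<in> A" "w \<in> lists (A \<times> UNIV)" using Cons.prems x by auto
  have 1: "([(a,b)] @ (w @ inv_sw w) @ [(a,\<not>b)], [(a,b)] @ [] @ [(a,\<not>b)]) \<in> pres_eq A Rs"
    by (rule peq_cong[OF Cons(1)[OF a(2)]]) (use a in auto)
  have "([] @ [(a,b),(a,\<not>b)] @ [], [] @ []) \<in> pres_step A Rs"
    by (rule pres_step.cancel[OF a(1)])
  then have 2: "([(a,b),(a,\<not>b)], []) \<in> pres_eq A Rs"
    using a by (auto simp: pres_eq_def)
  show ?case using peq_trans[OF 1] 2 by (simp add: x inv_sw_Cons)
qed

lemma peq_cancel2: "w \<in> lists (A \<times> UNIV) \<Longrightarrow> (inv_sw w @ w, []) \<in> pres_eq A Rs"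
  using peq_cancel[OF inv_sw_lists, of w A Rs] by simp

lemma step_inv:
  assumes "(x,y) \<in> pres_step A Rs" shows "(inv_sw x, inv_sw y) \<in> pres_step A Rs"
  using assms
proof cases
  case (cancel z u b v)
  have "inv_sw [(z, b), (z, \<not> b)] = [(z, b), (z, \<not> b)]" by (simp add: inv_sw_def)
  then show ?thesis using cancel pres_step.cancel[of z A "inv_sw v" b "inv_sw u" Rs]
    by (simp add: inv_sw_app del: append.simps append_Cons)
next
  case (relator r u v)
  then show ?thesis using pres_step.relator_inv[of r Rs "inv_sw v" "inv_sw u" A] by (simp add: inv_sw_app)
next
  case (relator_inv r u v)
  then show ?thesis using pres_step.relator[of r Rs "inv_sw v" "inv_sw u" A] by (simp add: inv_sw_app)
qed

lemma peq_inv: "(u,v) \<in> pres_eq A Rs \<Longrightarrow> (inv_sw u, inv_sw v) \<in> pres_eq A Rs"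
proof -
  assume a: "(u,v) \<in> pres_eq A Rs"
  have "(u,v) \<in> (pres_step A Rs \<union> (pres_step A Rs)\<inverse>)\<^sup>*" using a by (simp add: pres_eq_def)
  then have "(inv_sw u, inv_sw v) \<in> (pres_step A Rs \<union> (pres_step A Rs)\<inverse>)\<^sup>*"
  proof induction
    case base then show ?case by simp
  next
    case (step y z)
    then have "(inv_sw y, inv_sw z) \<in> pres_step A Rs \<union> (pres_step A Rs)\<inverse>"
      using step_inv by blast
    then show ?case using step.IH by (meson rtrancl.rtrancl_into_rtrancl)
  qed
  then show ?thesis using a inv_sw_lists by (auto simp: pres_eq_def)
qed

lemma peq_swap: "(u@v, []) \<in> pres_eq A Rs \<Longrightarrow> (v@u, []) \<in> pres_eq A Rs"
proof -
  assume a: "(u@v, []) \<in> pres_eq A Rs"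
  then have "u@v \<in> lists (A \<times> UNIV)" using peq_lists by blast
  then have l: "u \<in> lists (A \<times> UNIV)" "v \<in> lists (A \<times> UNIV)" by auto
  have 1: "(v@u@(v@inv_sw v), v@u@[]) \<in> pres_eq A Rs"
    using peq_congL[OF peq_cancel[OF l(2)], of "v@u"] l by auto
  have 2: "(v@(u@v)@inv_sw v, v@[]@inv_sw v) \<in> pres_eq A Rs"
    using peq_cong[OF a] l inv_sw_lists by blast
  have 3: "(v@inv_sw v, []) \<in> pres_eq A Rs" using peq_cancel[OF l(2)] .
  have h1: "(v@u, v@u@v@inv_sw v) \<in> pres_eq A Rs" using peq_sym[OF 1] by simp
  have h2: "(v@u@v@inv_sw v, v@inv_sw v) \<in> pres_eq A Rs" using 2 by simp
  show ?thesis using peq_trans[OF peq_trans[OF h1 h2] 3] .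
qed

lemma peq_solve: "(P@u@Q, []) \<in> pres_eq A Rs \<Longrightarrow> (u, inv_sw P @ inv_sw Q) \<in> pres_eq A Rs"
proof -
  assume a: "(P@u@Q, []) \<in> pres_eq A Rs"
  then have "P@u@Q \<in> lists (A \<times> UNIV)" using peq_lists by blast
  then have l: "P \<in> lists (A \<times> UNIV)" "u \<in> lists (A \<times> UNIV)" "Q \<in> lists (A \<times> UNIV)"
    by auto
  have b: "((u@Q)@P, []) \<in> pres_eq A Rs" using peq_swap[of P "u@Q"] a by simp
  have QP: "Q@P \<in> lists (A \<times> UNIV)" using l by auto
  have 1: "(u@((Q@P)@inv_sw(Q@P)), u@[]) \<in> pres_eq A Rs"
    using peq_congL[OF peq_cancel[OF QP] l(2)] .
  have 2: "((u@Q@P)@inv_sw(Q@P), []@inv_sw(Q@P)) \<in> pres_eq A Rs"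
    using peq_congR[OF b inv_sw_lists[OF QP]] by simp
  have h1: "(u, (u@Q@P)@inv_sw(Q@P)) \<in> pres_eq A Rs" using peq_sym[OF 1] by simp
  show ?thesis using peq_trans[OF h1 2] by (simp add: inv_sw_app)
qed


lemma funpow_in: "x \<in> A \<Longrightarrow> f ` A \<subseteq> A \<Longrightarrow> (f^^k) x \<in> A"
  by (induct k) auto

lemma funpow_inj: "inj_on f A \<Longrightarrow> f ` A \<subseteq> A \<Longrightarrow> y \<in> A \<Longrightarrow> z \<in> A \<Longrightarrow> (f^^i) y = (f^^i) z \<Longrightarrow> y = z"
proof (induct i)
  case 0 then show ?case by simp
next
  case (Suc i)
  have "(f^^i) y \<in> A" "(f^^i) z \<in> A" using funpow_in[OF Suc.prems(3,2)] funpow_in[OF Suc.prems(4,2)] by auto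
  then have "(f^^i) y = (f^^i) z" using Suc.prems(1,5) inj_onD[OF Suc.prems(1)] by simp
  then show ?case by (rule Suc.hyps[OF Suc.prems(1-4)])
qed

lemma orb_period:
  assumes "finite A" "inj_on f A" "f ` A \<subseteq> A" "x \<in> A"
  shows "\<exists>p>0. (f^^p) x = x"
proof -
  have "\<not> inj (\<lambda>k::nat. (f^^k) x)"
  proof
    assume "inj (\<lambda>k::nat. (f^^k) x)"
    moreover have "range (\<lambda>k::nat. (f^^k) x) \<subseteq> A" using funpow_in[OF assms(4,3)] by blast
    ultimately have "finite (UNIV :: nat set)"
      using finite_imageD[of "\<lambda>k::nat. (f^^k) x" UNIV] finite_subset[OF _ assms(1)] by blast
    then show False by simp
  qed
  then obtain i j where ij: "i \<noteq> j" "(f^^i) x = (f^^j) x" unfolding inj_def by blast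
  have key: "\<exists>p>0. (f^^p) x = x" if lt: "i < j" and e: "(f^^i) x = (f^^j) x" for i j
  proof -
    have "(f^^i) ((f^^(j-i)) x) = (f^^(i + (j-i))) x" by (simp add: funpow_add)
    also have "i + (j-i) = j" using lt by simp
    finally have "(f^^i) ((f^^(j-i)) x) = (f^^i) x" using e by simp
    then have "(f^^(j-i)) x = x" by (rule funpow_inj[OF assms(2,3) funpow_in[OF assms(4,3)] assms(4)])
    then show ?thesis using lt by (intro exI[of _ "j-i"]) auto
  qed
  show ?thesis
  proof (cases "i < j")
    case True then show ?thesis using key ij(2) by blast
  next
    case False then have "j < i" using ij(1) by simp
    then show ?thesis using key ij(2) by metis
  qed
qed

definition per :: "('a \<Rightarrow> 'a) \<Rightarrow> 'a \<Rightarrow> nat" where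
  "per f x = (LEAST p. p > 0 \<and> (f^^p) x = x)"

locale orbs =
  fixes A and f :: "'a \<Rightarrow> 'a"
  assumes fin: "finite A" and inj: "inj_on f A" and cl: "f ` A \<subseteq> A"
begin

lemma per: "x \<in> A \<Longrightarrow> per f x > 0 \<and> (f^^per f x) x = x"
proof -
  assume x: "x \<in> A"
  show ?thesis unfolding per_def by (rule LeastI_ex[OF orb_period[OF fin inj cl x]])
qed

lemma per_min: "0 < q \<Longrightarrow> q < per f x \<Longrightarrow> (f^^q) x \<noteq> x"
proof
  assume "0 < q" "q < per f x" "(f^^q) x = x"
  then show False using not_less_Least[of q "\<lambda>p. p > 0 \<and> (f^^p) x = x"] unfolding per_def by simp
qed

lemma pow_mult: "x \<in> A \<Longrightarrow> (f^^(q * per f x)) x = x"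
proof (induct q)
  case 0 then show ?case by simp
next
  case (Suc q)
  have "(f^^(Suc q * per f x)) x = (f^^(q * per f x + per f x)) x"
    by (simp add: add.commute)
  also have "\<dots> = (f^^(q * per f x)) ((f^^per f x) x)" by (simp only: funpow_add o_apply)
  finally have "(f^^(Suc q * per f x)) x = (f^^(q * per f x)) ((f^^per f x) x)" .
  then show ?case using Suc per by simp
qed

lemma pow_mod: "x \<in> A \<Longrightarrow> (f^^k) x = (f^^(k mod per f x)) x"
proof -
  assume x: "x \<in> A"
  have "(f^^k) x = (f^^(k mod per f x + (k div per f x) * per f x)) x" by (simp only: mod_div_mult_eq)
  also have "\<dots> = (f^^(k mod per f x)) ((f^^((k div per f x) * per f x)) x)"
    by (simp add: funpow_add)
  finally have "(f^^k) x = (f^^(k mod per f x)) ((f^^((k div per f x) * per f x)) x)" .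
  then show ?thesis using pow_mult x by simp
qed

lemma dorb_eq: "x \<in> A \<Longrightarrow> dorb f x = (\<lambda>k. (f^^k) x) ` {..<per f x}"
proof -
  assume x: "x \<in> A"
  have "(f^^k) x \<in> (\<lambda>k. (f^^k) x) ` {..<per f x}" for k
    using pow_mod[OF x, of k] per[OF x] by auto
  then show ?thesis unfolding dorb_def by auto
qed

lemma dorb_inj: "x \<in> A \<Longrightarrow> inj_on (\<lambda>k. (f^^k) x) {..<per f x}"
proof (rule inj_onI)
  fix i j assume x: "x \<in> A" and ij: "i \<in> {..<per f x}" "j \<in> {..<per f x}" "(f^^i) x = (f^^j) x"
  have key: "False" if lt: "i < j" "j < per f x" and e: "(f^^i) x = (f^^j) x" for i j
  proof -
    have "(f^^i) ((f^^(j-i)) x) = (f^^(i + (j-i))) x" by (simp add: funpow_add)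
    also have "i + (j-i) = j" using lt by simp
    finally have "(f^^i) ((f^^(j-i)) x) = (f^^i) x" using e by simp
    then have "(f^^(j-i)) x = x" by (rule funpow_inj[OF inj cl funpow_in[OF x cl] x])
    then show False using per_min[of "j-i" x] lt by auto
  qed
  show "i = j"
  proof (rule ccontr)
    assume "i \<noteq> j"
    then have "i < j \<or> j < i" by arith
    then show False using key ij by (metis lessThan_iff)
  qed
qed

lemma card_dorb: "x \<in> A \<Longrightarrow> card (dorb f x) = per f x"
proof -
  assume x: "x \<in> A"
  have "card ((\<lambda>k. (f^^k) x) ` {..<per f x}) = card {..<per f x}"
    by (rule card_image[OF dorb_inj[OF x]])
  then show ?thesis using dorb_eq[OF x] by simp
qed

lemma dorb_enum: "x \<in> A \<Longrightarrow> y \<in> dorb f x \<Longrightarrow> \<exists>j < card (dorb f x). y = (f^^j) x"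
proof -
  assume x: "x \<in> A" and y: "y \<in> dorb f x"
  then have "y \<in> (\<lambda>k. (f^^k) x) ` {..<per f x}" using dorb_eq[OF x] by simp
  then obtain j where "j < per f x" "y = (f^^j) x" by blast
  then show ?thesis using card_dorb[OF x] by auto
qed

lemma dorb_sub: "x \<in> A \<Longrightarrow> dorb f x \<subseteq> A"
  unfolding dorb_def using funpow_in[OF _ cl] by blast

lemma dorb_self: "x \<in> dorb f x"
  unfolding dorb_def by (rule CollectI, rule exI[of _ 0]) simp

lemma dorb_same: "x \<in> A \<Longrightarrow> y \<in> dorb f x \<Longrightarrow> dorb f y = dorb f x"
proof -
  assume x: "x \<in> A" and y: "y \<in> dorb f x"
  obtain j where j: "j < per f x" "y = (f^^j) x" using dorb_enum[OF x y] card_dorb[OF x] by auto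
  have a: "(f^^k) y = (f^^(k+j)) x" for k unfolding j(2) by (simp add: funpow_add)
  have 1: "dorb f y \<subseteq> dorb f x" unfolding dorb_def using a by blast
  have "(f^^(per f x - j)) y = (f^^(per f x - j + j)) x" by (rule a)
  also have "\<dots> = x" using j per[OF x] by simp
  finally have xe: "(f^^(per f x - j)) y = x" .
  have b: "(f^^k) x = (f^^(k + (per f x - j))) y" for k
    by (subst xe[symmetric]) (simp add: funpow_add)
  have "dorb f x \<subseteq> dorb f y" unfolding dorb_def using b by blast
  with 1 show ?thesis by blast
qed

end


lemma pm_orbs: "planar_map D \<Longrightarrow> orbs (darts D) (phi D)"
proof -
  assume pm: "planar_map D"
  have fin: "finite (darts D)" and al: "\<forall>d\<in>darts D. alph D d \<in> darts D \<and> alph D d \<noteq> d \<and> alph D (alph D d) = d"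
    and sb: "bij_betw (sigm D) (darts D) (darts D)" using pm unfolding planar_map_def by auto
  have inj: "inj_on (phi D) (darts D)"
  proof (rule inj_onI)
    fix x y assume x: "x \<in> darts D" and y: "y \<in> darts D" and e: "phi D x = phi D y"
    have "sigm D (alph D x) = sigm D (alph D y)" using e by (simp add: phi_def)
    then have "alph D x = alph D y" using bij_betw_imp_inj_on[OF sb] al x y by (simp add: inj_on_def)
    then show "x = y" using al x y by metis
  qed
  have cl: "phi D ` darts D \<subseteq> darts D"
    using al bij_betw_imp_surj_on[OF sb] by (auto simp: phi_def)
  show ?thesis by (unfold_locales) (fact fin inj cl)+
qed

lemma set_pos_word: "set (pos_word r) = (\<lambda>x. (x,True)) ` set r"
  by (simp add: pos_word_def)
lemma set_inv_pos_word: "set (inv_sw (pos_word r)) = (\<lambda>x. (x,False)) ` set r"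
  by (auto simp: pos_word_def inv_sw_def)

lemma cell_dorb: "c \<in> cells D \<Longrightarrow> \<exists>x\<in>darts D. c = dorb (phi D) x"
  unfolding cells_def dfaces_def by auto

lemma cell_uniform:
  assumes pm: "planar_map D" and c: "c \<in> cells D" and rd: "reads D c r"
  shows "\<exists>s. \<forall>d\<in>c. snd (dlab D d) = s \<and> fst (dlab D d) \<in> set r"
proof -
  interpret orbs "darts D" "phi D" by (rule pm_orbs[OF pm])
  obtain x where x: "x \<in> darts D" "c = dorb (phi D) x" using cell_dorb[OF c] by blast
  obtain d0 where d0: "d0 \<in> c" "fword D d0 = pos_word r \<or> fword D d0 = inv_sw (pos_word r)"
    using rd unfolding reads_def by blast
  have d0d: "d0 \<in> darts D" using dorb_sub[OF x(1)] d0(1) x(2) by blast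
  have same: "dorb (phi D) d0 = c" using dorb_same[OF x(1)] d0(1) x(2) by blast
  have inw: "dlab D d \<in> set (fword D d0)" if d: "d \<in> c" for d
  proof -
    obtain j where j: "j < card (dorb (phi D) d0)" "d = (phi D ^^ j) d0"
      using dorb_enum[OF d0d, of d] d same by auto
    show ?thesis unfolding fword_def using j by auto
  qed
  show ?thesis
  proof (cases "fword D d0 = pos_word r")
    case True
    then show ?thesis using inw set_pos_word[of r] by (intro exI[of _ True]) fastforce
  next
    case False
    then have "fword D d0 = inv_sw (pos_word r)" using d0(2) by simp
    then show ?thesis using inw set_inv_pos_word[of r] by (intro exI[of _ False]) fastforce
  qed
qed

lemma cell_no_both:
  assumes pm: "planar_map D" and c: "c \<in> cells D" and rd: "reads D c r"
    and lab: "dlab D (alph D d) = (fst (dlab D d), \<not> snd (dlab D d))"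
    and d: "d \<in> c" and ad: "alph D d \<in> c"
  shows False
proof -
  obtain s where "\<forall>d\<in>c. snd (dlab D d) = s" using cell_uniform[OF pm c rd] by blast
  then show False using d ad lab by (metis snd_conv)
qed

lemma tri_orb:
  assumes "phi D x = y" "phi D y = z" "phi D z = x"
  shows "dorb (phi D) x = {x,y,z}"
proof -
  have "(phi D ^^ k) x \<in> {x,y,z}" for k by (induct k) (use assms in auto)
  moreover have "(phi D ^^ 0) x = x" "(phi D ^^ 1) x = y" "(phi D ^^ 2) x = z"
    using assms by (auto simp: numeral_2_eq_2)
  then have "x \<in> dorb (phi D) x" "y \<in> dorb (phi D) x" "z \<in> dorb (phi D) x"
    unfolding dorb_def by (metis (mono_tags, lifting) mem_Collect_eq)+
  ultimately show ?thesis unfolding dorb_def by auto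
qed

lemma tri_fword:
  assumes "phi D x = y" "phi D y = z" "phi D z = x" "card {x,y,z} = 3"
  shows "fword D x = [dlab D x, dlab D y, dlab D z]"
proof -
  have "card (dorb (phi D) x) = 3" using tri_orb[OF assms(1-3)] assms(4) by simp
  then show ?thesis unfolding fword_def using assms(1,2)
    by (simp add: numeral_3_eq_3 upt_rec)
qed


definition good :: "'a set \<Rightarrow> 'a sword set \<Rightarrow> 'a sword set \<Rightarrow> bool" where
  "good AA RR XX \<longleftrightarrow> XX \<noteq> {} \<and> (\<forall>u\<in>XX. \<forall>v\<in>XX. (u,v) \<in> pres_eq AA RR) \<and>
      (\<forall>u\<in>XX. \<forall>v. (u,v) \<in> pres_eq AA RR \<longrightarrow> v \<in> XX)"

lemma good_class: "x \<in> lists (A \<times> UNIV) \<Longrightarrow> good A Rs (pres_eq A Rs `` {x})"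
  unfolding good_def using peq_refl peq_sym peq_trans by (metis Image_singleton_iff empty_iff)

lemma good_quot: "Y \<in> lists (A \<times> UNIV) // pres_eq A Rs \<Longrightarrow> good A Rs Y"
  unfolding quotient_def using good_class by blast

lemma good_inv: "good A Rs Y \<Longrightarrow> good A Rs (inv_sw ` Y)"
proof -
  assume g: "good A Rs Y"
  have 1: "inv_sw ` Y \<noteq> {}" using g by (simp add: good_def)
  have 2: "(u,v) \<in> pres_eq A Rs" if uv: "u \<in> inv_sw ` Y" "v \<in> inv_sw ` Y" for u v
  proof -
    obtain u' where "u' \<in> Y" "u = inv_sw u'" using uv(1) by blast
    moreover obtain v' where "v' \<in> Y" "v = inv_sw v'" using uv(2) by blast
    ultimately show ?thesis using g peq_inv unfolding good_def by blast
  qed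
  have 3: "v \<in> inv_sw ` Y" if uv: "u \<in> inv_sw ` Y" "(u,v) \<in> pres_eq A Rs" for u v
  proof -
    obtain u' where u': "u' \<in> Y" "u = inv_sw u'" using uv(1) by blast
    have "(u', inv_sw v) \<in> pres_eq A Rs" using peq_inv[OF uv(2)] u' by simp
    then have "inv_sw v \<in> Y" using g u' unfolding good_def by blast
    then show ?thesis by (metis image_eqI inv_sw_inv)
  qed
  show ?thesis using 1 2 3 unfolding good_def by blast
qed

lemma good_mem: "good A Rs Y \<Longrightarrow> u \<in> Y \<Longrightarrow> (u,v) \<in> pres_eq A Rs \<Longrightarrow> v \<in> Y"
  unfolding good_def by blast
lemma good_eq: "good A Rs Y \<Longrightarrow> u \<in> Y \<Longrightarrow> v \<in> Y \<Longrightarrow> (u,v) \<in> pres_eq A Rs"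
  unfolding good_def by blast
lemma good_lists: "good A Rs Y \<Longrightarrow> u \<in> Y \<Longrightarrow> u \<in> lists (A \<times> UNIV)"
  unfolding good_def using peq_lists by blast

lemma tlen_le: "u \<in> Y \<Longrightarrow> tlen Y \<le> length u"
  unfolding tlen_def by (rule Least_le) blast

lemma tlen_ex: "Y \<noteq> {} \<Longrightarrow> \<exists>w\<in>Y. length w = tlen Y"
  unfolding tlen_def by (rule LeastI_ex) blast

lemma tlen_inv: "tlen (inv_sw ` Y) = tlen Y"
  unfolding tlen_def by simp

lemma concat_peq:
  "list_all2 (\<in>) ws Ys \<Longrightarrow> list_all2 (\<in>) ws' Ys \<Longrightarrow> (\<forall>Y\<in>set Ys. good A Rs Y)
   \<Longrightarrow> (concat ws, concat ws') \<in> pres_eq A Rs"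
proof (induct ws Ys arbitrary: ws' rule: list_all2_induct)
  case Nil then show ?case by (simp add: peq_refl)
next
  case (Cons w ws Y Ys)
  obtain w' ws'' where ws': "ws' = w' # ws''" "w' \<in> Y" "list_all2 (\<in>) ws'' Ys"
    using Cons.prems(1) by (cases ws') auto
  have "(w, w') \<in> pres_eq A Rs" using good_eq[of A Rs Y w w'] Cons.hyps(1) Cons.prems(2) ws'(2) by simp
  moreover have "(concat ws, concat ws'') \<in> pres_eq A Rs" using Cons ws' by simp
  ultimately show ?case using peq_app ws' by simp
qed

lemma tprod_eq:
  assumes "list_all2 (\<in>) ws Ys" "\<forall>Y\<in>set Ys. good A Rs Y"
  shows "pres_eq A Rs `` {concat ws' | ws'. list_all2 (\<in>) ws' Ys} = pres_eq A Rs `` {concat ws}"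
proof
  show "pres_eq A Rs `` {concat ws' | ws'. list_all2 (\<in>) ws' Ys} \<subseteq> pres_eq A Rs `` {concat ws}"
  proof
    fix v assume "v \<in> pres_eq A Rs `` {concat ws' | ws'. list_all2 (\<in>) ws' Ys}"
    then obtain ws' where "list_all2 (\<in>) ws' Ys" "(concat ws', v) \<in> pres_eq A Rs" by blast
    then show "v \<in> pres_eq A Rs `` {concat ws}"
      using concat_peq[OF assms(1) _ assms(2)] peq_trans by blast
  qed
next
  show "pres_eq A Rs `` {concat ws} \<subseteq> pres_eq A Rs `` {concat ws' | ws'. list_all2 (\<in>) ws' Ys}"
    using assms(1) by blast
qed

lemma concat_lists: "list_all2 (\<in>) ws Ys \<Longrightarrow> (\<forall>Y\<in>set Ys. good A Rs Y) \<Longrightarrow> concat ws \<in> lists (A \<times> UNIV)"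
proof (induct ws Ys rule: list_all2_induct)
  case Nil then show ?case by simp
next
  case (Cons w ws Y Ys) then show ?case using good_lists[of A Rs Y w] by simp
qed


locale clus =
  fixes G :: "('g,'b) monoid_scheme" and S :: "'g set" and R :: "'g list set"
    and Ss :: "nat \<Rightarrow> 'g set" and rho :: enat and n :: nat
    and D :: "('d,'g) vkdiag" and i :: nat and C :: "'d set set"
    and m :: nat and b :: "nat \<Rightarrow> 'd" and t :: "nat \<Rightarrow> 'd" and f :: "nat \<Rightarrow> 'd set"
  assumes vk: "vk_diagram G S R Ss rho n D"
  and ii: "i \<in> {1..n}"
  and Csub: "C \<subseteq> cells D"
  and Chty: "\<forall>c\<in>C. htype G Ss rho D i c"
  and Ccl: "\<forall>c\<in>C. \<forall>c'. (c,c') \<in> cadj G Ss rho D i \<longrightarrow> c' \<in> C"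
  and nc: "\<not> complicated D C"
  and m3: "3 \<le> m" and finj: "inj_on f {1..m-2}" and Cf: "C = f ` {1..m-2}"
  and bd: "\<forall>k\<in>{1..m}. b k \<in> darts D"
  and tt: "\<forall>j\<in>{2..m-2}. t j \<in> darts D \<and>
          hval D (t j) = tprod G Ss rho i (map (\<lambda>k. hval D (b k)) [1..<j+1])"
  and tri: "\<forall>k\<in>{1..m-2}.
         let ein = (if k = 1 then b 1 else t k);
             eout = (if k = m - 2 then b m else alph D (t (k+1)))
         in card (f k) = 3 \<and> f k = dorb (phi D) ein \<and>
            phi D ein = b (k+1) \<and> phi D (b (k+1)) = eout \<and> phi D eout = ein"
  and bdc: "{{b k, alph D (b k)} | k. k \<in> {1..m}} = bdC D C"
begin

definition ein where "ein k = (if k = 1 then b 1 else t k)"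
definition eout where "eout k = (if k = m - 2 then b m else alph D (t (k+1)))"

abbreviation "AA \<equiv> Ss i"
abbreviation "RR \<equiv> tRel G Ss rho i"
abbreviation "EE \<equiv> pres_eq AA RR"

lemma tEq_EE: "tEq G Ss rho i = EE" by (simp add: tEq_def)

lemma pm: "planar_map D" using vk by (simp add: vk_diagram_def)
lemma labs: "d \<in> darts D \<Longrightarrow> fst (dlab D d) \<in> Shat G S Ss rho n \<and>
                  dlab D (alph D d) = (fst (dlab D d), \<not> snd (dlab D d))"
  using vk by (simp add: vk_diagram_def)
lemma alph_d: "d \<in> darts D \<Longrightarrow> alph D d \<in> darts D \<and> alph D d \<noteq> d \<and> alph D (alph D d) = d"
  using pm by (simp add: planar_map_def)

interpretation O: orbs "darts D" "phi D" by (rule pm_orbs[OF pm])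

lemma fin_cells: "finite (cells D)"
proof -
  have "dfaces D = (\<lambda>d. dorb (phi D) d) ` darts D" unfolding dfaces_def by auto
  then have "finite (dfaces D)" using O.fin by simp
  then show ?thesis unfolding cells_def by simp
qed

lemma cell_sub: "c \<in> cells D \<Longrightarrow> c \<subseteq> darts D"
  using cell_dorb O.dorb_sub by blast

lemma finC: "finite C" using fin_cells Csub finite_subset by blast

lemma trik: "k \<in> {1..m-2} \<Longrightarrow> card (f k) = 3 \<and> f k = dorb (phi D) (ein k) \<and>
    phi D (ein k) = b (k+1) \<and> phi D (b (k+1)) = eout k \<and> phi D (eout k) = ein k"
  using tri unfolding ein_def eout_def Let_def by blast

lemma fk: "k \<in> {1..m-2} \<Longrightarrow> f k = {ein k, b (k+1), eout k} \<and> card {ein k, b (k+1), eout k} = 3"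
  using trik[of k] tri_orb[of D "ein k" "b (k+1)" "eout k"] by auto

lemma fkC: "k \<in> {1..m-2} \<Longrightarrow> f k \<in> C" using Cf by blast

lemma fk_cell: "k \<in> {1..m-2} \<Longrightarrow> f k \<in> cells D" using fkC Csub by blast

lemma distinct3: "card {x,y,z} = 3 \<Longrightarrow> x \<noteq> y \<and> y \<noteq> z \<and> x \<noteq> z"
  by (cases "x = y"; cases "y = z"; cases "x = z") (auto simp: card_insert_if)

lemma C_reads: "c \<in> C \<Longrightarrow> \<exists>as. 1 \<le> length as \<and> length as \<le> 3 \<and> set as \<subseteq> tcarrier G Ss rho i \<and>
     tprod G Ss rho i as = tclass G Ss rho i [] \<and> reads D c (map (HL i) as)"
  using Chty unfolding htype_def HRel_def by blast

lemma letter: "c \<in> C \<Longrightarrow> d \<in> c \<Longrightarrow> \<exists>a. fst (dlab D d) = HL i a \<and> a \<in> tcarrier G Ss rho i"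
proof -
  assume c: "c \<in> C" and d: "d \<in> c"
  obtain as where as: "set as \<subseteq> tcarrier G Ss rho i" "reads D c (map (HL i) as)"
    using C_reads[OF c] by blast
  have "c \<in> cells D" using c Csub by blast
  then have "fst (dlab D d) \<in> set (map (HL i) as)" using cell_uniform[OF pm _ as(2)] d by blast
  then show ?thesis using as(1) by auto
qed

lemma hval_good: "c \<in> C \<Longrightarrow> d \<in> c \<Longrightarrow> good AA RR (hval D d) \<and> cx (fst (dlab D d)) = tlen (hval D d)"
proof -
  assume c: "c \<in> C" and d: "d \<in> c"
  obtain a where a: "fst (dlab D d) = HL i a" "a \<in> tcarrier G Ss rho i" using letter[OF c d] by blast
  have g: "good AA RR a" using a(2) good_quot unfolding tcarrier_def tEq_def by blast
  show ?thesis
  proof (cases "snd (dlab D d)")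
    case True
    then show ?thesis using a g by (simp add: hval_def cx_def)
  next
    case False
    then show ?thesis using a g good_inv by (simp add: hval_def cx_def tinv_def tlen_inv)
  qed
qed

lemma noboth: "c \<in> C \<Longrightarrow> d \<in> c \<Longrightarrow> alph D d \<notin> c"
proof
  assume c: "c \<in> C" and d: "d \<in> c" and ad: "alph D d \<in> c"
  obtain as where as: "reads D c (map (HL i) as)" using C_reads[OF c] by blast
  have cc: "c \<in> cells D" using c Csub by blast
  have "d \<in> darts D" using cell_sub[OF cc] d by blast
  then show False using cell_no_both[OF pm cc as _ d ad] labs by blast
qed

definition g where "g k = (if k = 1 then 1 else if k = m then m - 2 else k - 1)"

lemma g_range: "k \<in> {1..m} \<Longrightarrow> g k \<in> {1..m-2}"
  using m3 unfolding g_def by auto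

lemma b_in_g: "k \<in> {1..m} \<Longrightarrow> b k \<in> f (g k)"
proof -
  assume k: "k \<in> {1..m}"
  show ?thesis
  proof (cases "k = 1")
    case True
    then show ?thesis using fk[of 1] m3 by (auto simp: g_def ein_def)
  next
    case False
    show ?thesis
    proof (cases "k = m")
      case True
      then have "eout (m-2) = b m" by (simp add: eout_def)
      then show ?thesis using fk[of "m-2"] m3 True \<open>k \<noteq> 1\<close> by (auto simp: g_def)
    next
      case False
      then have "k - 1 \<in> {1..m-2}" "k - 1 + 1 = k" using k \<open>k \<noteq> 1\<close> by auto
      then show ?thesis using fk[of "k-1"] False \<open>k \<noteq> 1\<close> by (auto simp: g_def)
    qed
  qed
qed

lemma bC: "k \<in> {1..m} \<Longrightarrow> f (g k) \<in> C" using fkC g_range by blast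

lemma ein_d: "k \<in> {1..m-2} \<Longrightarrow> ein k \<in> darts D"
  using fk[of k] fk_cell[of k] cell_sub by blast

lemma disj: "k \<in> {1..m-2} \<Longrightarrow> k' \<in> {1..m-2} \<Longrightarrow> d \<in> f k \<Longrightarrow> d \<in> f k' \<Longrightarrow> k = k'"
proof -
  assume k: "k \<in> {1..m-2}" and k': "k' \<in> {1..m-2}" and d: "d \<in> f k" "d \<in> f k'"
  have "f k = dorb (phi D) d" using O.dorb_same[OF ein_d[OF k], of d] trik[OF k] d(1) by simp
  moreover have "f k' = dorb (phi D) d" using O.dorb_same[OF ein_d[OF k'], of d] trik[OF k'] d(2) by simp
  ultimately have "f k = f k'" by simp
  then show "k = k'" using finj k k' by (simp add: inj_on_def)
qed

lemma binj_lt: "k \<in> {1..m} \<Longrightarrow> k' \<in> {1..m} \<Longrightarrow> k < k' \<Longrightarrow> b k \<noteq> b k'"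
proof
  assume k: "k \<in> {1..m}" and k': "k' \<in> {1..m}" and lt: "k < k'" and e: "b k = b k'"
  have "g k = g k'" using disj[OF g_range[OF k] g_range[OF k'] b_in_g[OF k]] b_in_g[OF k'] e by simp
  then have cs: "(k = 1 \<and> k' = 2) \<or> (k = m - 1 \<and> k' = m) \<or> (m = 3 \<and> k = 1 \<and> k' = 3)"
    using k k' lt m3 unfolding g_def by (auto split: if_splits)
  have f1: "card {ein 1, b 2, eout 1} = 3" using fk[of 1] m3 by (simp add: numeral_2_eq_2)
  have f2: "card {ein (m-2), b (m-1), eout (m-2)} = 3" using fk[of "m-2"] m3
    by (simp add: Suc_diff_Suc numeral_2_eq_2)
  show False
  proof -
    { assume "k = 1 \<and> k' = 2"
      then have False using e distinct3[OF f1] by (simp add: ein_def) }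
    moreover
    { assume a: "k = m - 1 \<and> k' = m"
      have "eout (m-2) = b m" by (simp add: eout_def)
      then have False using a e f2 distinct3 by metis }
    moreover
    { assume a: "m = 3 \<and> k = 1 \<and> k' = 3"
      have m21: "m - 2 = 1" using a by simp
      have "eout 1 = b m" unfolding eout_def using m21 by simp
      then have "eout 1 = b 3" using a by simp
      moreover have "ein 1 = b 1" by (simp add: ein_def)
      ultimately have False using a e f1 distinct3 by metis }
    ultimately show False using cs by blast
  qed
qed

lemma binj: "k \<in> {1..m} \<Longrightarrow> k' \<in> {1..m} \<Longrightarrow> b k = b k' \<Longrightarrow> k = k'"
  using binj_lt by (metis linorder_neqE_nat)

lemma dedges_fin: "finite (dedges D)"
proof -
  have "dedges D = (\<lambda>d. {d, alph D d}) ` darts D" unfolding dedges_def by auto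
  then show ?thesis using O.fin by simp
qed

lemma bnd1: "k \<in> {1..m} \<Longrightarrow> {b k, alph D (b k)} \<notin> bdD D \<Longrightarrow> tlen (hval D (b k)) \<le> 1"
proof -
  assume k: "k \<in> {1..m}" and nb: "{b k, alph D (b k)} \<notin> bdD D"
  define E where "E = {b k, alph D (b k)}"
  define ab where "ab = alph D (b k)"
  have bk: "b k \<in> darts D" using bd k by blast
  have Ed: "E \<in> dedges D" unfolding E_def dedges_def using bk by blast
  have "E \<inter> outer D = {}" using nb Ed unfolding bdD_def E_def by blast
  then have abo: "ab \<notin> outer D" unfolding E_def ab_def by blast
  have abd: "ab \<in> darts D" using alph_d[OF bk] ab_def by simp
  define c' where "c' = dorb (phi D) ab"
  have abc: "ab \<in> c'" unfolding c'_def by (rule O.dorb_self)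
  have c'f: "c' \<in> dfaces D" unfolding c'_def dfaces_def using abd by blast
  have c'c: "c' \<in> cells D" unfolding cells_def using c'f abc abo by blast
  obtain r where r: "r \<in> XRel G R Ss rho n" "reads D c' r" using vk c'c unfolding vk_diagram_def by blast
  have c0: "f (g k) \<in> C" "b k \<in> f (g k)" using bC[OF k] b_in_g[OF k] by auto
  obtain a where a: "fst (dlab D (b k)) = HL i a" "a \<in> tcarrier G Ss rho i" using letter[OF c0] by blast
  have lab_ab: "fst (dlab D ab) = HL i a" using labs[OF bk] a ab_def by simp
  have inr: "HL i a \<in> set r" using cell_uniform[OF pm c'c r(2)] abc lab_ab by metis
  have cxe: "cx (fst (dlab D (b k))) = tlen (hval D (b k))" using hval_good[OF c0] by blast
  have "cx (HL i a) \<le> 1"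
  proof (cases "r \<in> Rprime G R Ss rho n")
    case True
    then obtain s where s: "s \<in> Ss i" "a = tclass G Ss rho i [(s, False)]"
      using inr unfolding Rprime_def by auto
    have "[(s,False)] \<in> lists (AA \<times> UNIV)" using s by simp
    then have "([(s,False)], [(s,False)]) \<in> EE" by (rule peq_refl)
    then have "[(s,False)] \<in> a" using s by (simp add: tclass_def tEq_def)
    then show ?thesis using tlen_le[of "[(s,False)]" a] by (simp add: cx_def)
  next
    case False
    then have "r \<in> (\<Union>j\<in>{1..n}. HRel G Ss rho j)" using r(1) unfolding XRel_def by blast
    then obtain j where j23: "j \<in> {1..n}" "r \<in> HRel G Ss rho j" by blast
    then obtain as where "r = map (HL j) as" unfolding HRel_def by blast
    note j = this j23
    have "j = i" using inr j(1) by auto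
    then have hc': "htype G Ss rho D i c'" unfolding htype_def using j r(2) by blast
    have c0c: "f (g k) \<in> cells D" using c0(1) Csub by blast
    have hc0: "htype G Ss rho D i (f (g k))" using c0(1) Chty by blast
    have "E \<inter> f (g k) \<noteq> {}" "E \<inter> c' \<noteq> {}" using c0(2) abc unfolding E_def ab_def by auto
    then have "\<exists>e\<in>dedges D. e \<inter> f (g k) \<noteq> {} \<and> e \<inter> c' \<noteq> {}" using Ed by blast
    then have "(f (g k), c') \<in> cadj G Ss rho D i"
      unfolding cadj_def using c0c c'c hc0 hc' by simp
    then have c'C: "c' \<in> C" using Ccl c0(1) by blast
    have "E \<in> bdC D C" using bdc k unfolding E_def by blast
    then have c1: "card {c \<in> C. E \<inter> c \<noteq> {}} = 1" unfolding bdC_def by blast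
    have "f (g k) \<in> {c \<in> C. E \<inter> c \<noteq> {}}" "c' \<in> {c \<in> C. E \<inter> c \<noteq> {}}"
      using c0 c'C abc unfolding E_def ab_def by auto
    then have "f (g k) = c'" using c1 by (metis card_1_singletonE singletonD)
    then have False using noboth[OF c0] abc ab_def by simp
    then show ?thesis by simp
  qed
  then show ?thesis using cxe a by simp
qed

lemma k0: "\<exists>k0\<in>{1..m}. \<forall>k\<in>{1..m}. k \<noteq> k0 \<longrightarrow> tlen (hval D (b k)) \<le> 1"
proof (rule ccontr)
  assume "\<not> ?thesis"
  then have h: "\<forall>k0\<in>{1..m}. \<exists>k\<in>{1..m}. k \<noteq> k0 \<and> tlen (hval D (b k)) > 1"
    by (meson not_le_imp_less)
  obtain k1 where k1: "k1 \<in> {1..m}" "tlen (hval D (b k1)) > 1" using h m3 by fastforce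
  obtain k2 where k2: "k2 \<in> {1..m}" "k2 \<noteq> k1" "tlen (hval D (b k2)) > 1" using h k1(1) by blast
  define E1 where "E1 = {b k1, alph D (b k1)}"
  define E2 where "E2 = {b k2, alph D (b k2)}"
  have E1b: "E1 \<in> bdD D" using bnd1[OF k1(1)] k1(2) E1_def by fastforce
  have E2b: "E2 \<in> bdD D" using bnd1[OF k2(1)] k2(3) E2_def by fastforce
  have E1c: "E1 \<in> bdC D C" using bdc k1(1) unfolding E1_def by blast
  have E2c: "E2 \<in> bdC D C" using bdc k2(1) unfolding E2_def by blast
  have fin: "finite (bdC D C \<inter> bdD D)" using dedges_fin unfolding bdD_def by auto
  have "E1 = E2"
  proof (rule ccontr)
    assume "E1 \<noteq> E2"
    then have "card {E1, E2} = 2" by simp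
    moreover have "{E1, E2} \<subseteq> bdC D C \<inter> bdD D" using E1b E2b E1c E2c by blast
    ultimately have "2 \<le> card (bdC D C \<inter> bdD D)" using card_mono[OF fin] by metis
    then show False using nc unfolding complicated_def by simp
  qed
  then have "b k2 = b k1 \<or> b k2 = alph D (b k1)" unfolding E1_def E2_def by blast
  moreover have "b k2 \<noteq> b k1" using binj k1(1) k2(1,2) by blast
  ultimately have e: "b k2 = alph D (b k1)" by simp
  have c1: "card {c \<in> C. E1 \<inter> c \<noteq> {}} = 1" using E1c unfolding bdC_def by blast
  have "f (g k1) \<in> {c \<in> C. E1 \<inter> c \<noteq> {}}" "f (g k2) \<in> {c \<in> C. E1 \<inter> c \<noteq> {}}"
    using bC[OF k1(1)] bC[OF k2(1)] b_in_g[OF k1(1)] b_in_g[OF k2(1)] e unfolding E1_def by auto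
  then have "f (g k1) = f (g k2)" using c1 by (metis card_1_singletonE singletonD)
  then show False using noboth[OF bC[OF k1(1)] b_in_g[OF k1(1)]] b_in_g[OF k2(1)] e by simp
qed

definition Rel3 where "Rel3 XA XB XC \<longleftrightarrow> (\<forall>u\<in>XA. \<forall>v\<in>XB. \<forall>w\<in>XC. (u@v@w, []) \<in> EE)"

lemma rot: "Rel3 XA XB XC \<Longrightarrow> Rel3 XB XC XA"
  unfolding Rel3_def using peq_swap by fastforce

lemma tprod_triv:
  assumes "set as \<subseteq> tcarrier G Ss rho i" "tprod G Ss rho i as = tclass G Ss rho i []"
    and ws: "list_all2 (\<in>) ws as"
  shows "(concat ws, []) \<in> EE"
proof -
  have g: "\<forall>Y\<in>set as. good AA RR Y" using assms(1) good_quot unfolding tcarrier_def tEq_def by blast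
  have "([],[]) \<in> EE" by (rule peq_refl) simp
  then have "[] \<in> tprod G Ss rho i as" using assms(2) by (simp add: tclass_def tEq_def)
  then obtain ws' where ws': "list_all2 (\<in>) ws' as" "(concat ws', []) \<in> EE"
    unfolding tprod_def tEq_def by blast
  show ?thesis using peq_trans[OF concat_peq[OF ws ws'(1) g] ws'(2)] .
qed

lemma rel_base:
  assumes fw: "[dlab D p, dlab D q, dlab D r] = pos_word (map (HL i) as) \<or>
               [dlab D p, dlab D q, dlab D r] = inv_sw (pos_word (map (HL i) as))"
    and as: "set as \<subseteq> tcarrier G Ss rho i" "tprod G Ss rho i as = tclass G Ss rho i []"
  shows "Rel3 (hval D p) (hval D q) (hval D r)"
proof -
  have lp: "length (pos_word (map (HL i) as)) = length as" by (simp add: pos_word_def)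
  have l3: "length [dlab D p, dlab D q, dlab D r] = 3" by simp
  have "length as = 3"
  proof (cases "[dlab D p, dlab D q, dlab D r] = pos_word (map (HL i) as)")
    case True then show ?thesis using lp l3 by simp
  next
    case False then have "[dlab D p, dlab D q, dlab D r] = inv_sw (pos_word (map (HL i) as))" using fw by simp
    then have "length [dlab D p, dlab D q, dlab D r] = length (pos_word (map (HL i) as))"
      by (metis inv_sw_len)
    then show ?thesis using lp l3 by simp
  qed
  then obtain a1 a2 a3 where as3: "as = [a1,a2,a3]"
    by (metis (no_types, opaque_lifting) length_0_conv length_Suc_conv numeral_3_eq_3)
  from fw show ?thesis
  proof
    assume "[dlab D p, dlab D q, dlab D r] = pos_word (map (HL i) as)"
    then have h: "hval D p = a1" "hval D q = a2" "hval D r = a3"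
      by (auto simp: as3 pos_word_def hval_def)
    show ?thesis unfolding Rel3_def h
    proof (intro ballI)
      fix u v w assume "u \<in> a1" "v \<in> a2" "w \<in> a3"
      then have "list_all2 (\<in>) [u,v,w] as" by (simp add: as3)
      from tprod_triv[OF as this] show "(u@v@w, []) \<in> EE" by simp
    qed
  next
    assume "[dlab D p, dlab D q, dlab D r] = inv_sw (pos_word (map (HL i) as))"
    then have h: "hval D p = inv_sw ` a3" "hval D q = inv_sw ` a2" "hval D r = inv_sw ` a1"
      by (auto simp: as3 pos_word_def inv_sw_def hval_def tinv_def)
    show ?thesis unfolding Rel3_def h
    proof (intro ballI)
      fix u v w assume "u \<in> inv_sw ` a3" "v \<in> inv_sw ` a2" "w \<in> inv_sw ` a1"
      then obtain u' v' w' where uvw: "u' \<in> a3" "v' \<in> a2" "w' \<in> a1" "u = inv_sw u'" "v = inv_sw v'" "w = inv_sw w'"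
        by blast
      then have "list_all2 (\<in>) [w',v',u'] as" by (simp add: as3)
      from tprod_triv[OF as this] have "(w'@v'@u', []) \<in> EE" by simp
      then have "(inv_sw (w'@v'@u'), inv_sw []) \<in> EE" by (rule peq_inv)
      then show "(u@v@w, []) \<in> EE" using uvw by (simp add: inv_sw_app)
    qed
  qed
qed

lemma last_rel: "Rel3 (hval D (ein (m-2))) (hval D (b (m-1))) (hval D (b m))"
proof -
  define x where "x = ein (m-2)"
  define y where "y = b (m-1)"
  define z where "z = b m"
  have k: "m - 2 \<in> {1..m-2}" using m3 by simp
  have m1: "m - 2 + 1 = m - 1" using m3 by simp
  have ez: "eout (m-2) = z" by (simp add: eout_def z_def)
  have ph: "phi D x = y" "phi D y = z" "phi D z = x" using trik[OF k] m1 ez unfolding x_def y_def by auto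
  have fx: "f (m-2) = {x,y,z}" and cd: "card {x,y,z} = 3" using fk[OF k] m1 ez unfolding x_def y_def by auto
  have cd2: "card {y,z,x} = 3" "card {z,x,y} = 3" using cd by (simp_all add: insert_commute)
  obtain as where as: "set as \<subseteq> tcarrier G Ss rho i" "tprod G Ss rho i as = tclass G Ss rho i []"
      "reads D (f (m-2)) (map (HL i) as)" using C_reads[OF fkC[OF k]] by blast
  obtain d where d: "d \<in> {x,y,z}" "fword D d = pos_word (map (HL i) as) \<or> fword D d = inv_sw (pos_word (map (HL i) as))"
    using as(3) fx unfolding reads_def by auto
  have fwx: "fword D x = [dlab D x, dlab D y, dlab D z]" by (rule tri_fword[OF ph cd])
  have fwy: "fword D y = [dlab D y, dlab D z, dlab D x]" by (rule tri_fword[OF ph(2,3,1) cd2(1)])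
  have fwz: "fword D z = [dlab D z, dlab D x, dlab D y]" by (rule tri_fword[OF ph(3,1,2) cd2(2)])
  have "Rel3 (hval D x) (hval D y) (hval D z)"
  proof -
    { assume "d = x" then have ?thesis using rel_base[OF _ as(1,2)] d(2) fwx by simp }
    moreover
    { assume "d = y" then have "Rel3 (hval D y) (hval D z) (hval D x)" using rel_base[OF _ as(1,2)] d(2) fwy by simp
      then have ?thesis using rot by blast }
    moreover
    { assume "d = z" then have "Rel3 (hval D z) (hval D x) (hval D y)" using rel_base[OF _ as(1,2)] d(2) fwz by simp
      then have ?thesis using rot by blast }
    ultimately show ?thesis using d(1) by blast
  qed
  then show ?thesis unfolding x_def y_def z_def .
qed

lemma bgood: "k \<in> {1..m} \<Longrightarrow> good AA RR (hval D (b k))"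
  using hval_good[OF bC b_in_g] by blast

definition wb where "wb k = (SOME w. w \<in> hval D (b k) \<and> length w = tlen (hval D (b k)))"

lemma wb: "k \<in> {1..m} \<Longrightarrow> wb k \<in> hval D (b k) \<and> length (wb k) = tlen (hval D (b k))"
proof -
  assume k: "k \<in> {1..m}"
  have "hval D (b k) \<noteq> {}" using bgood[OF k] unfolding good_def by blast
  then have "\<exists>w. w \<in> hval D (b k) \<and> length w = tlen (hval D (b k))" using tlen_ex by blast
  then show ?thesis unfolding wb_def by (rule someI_ex)
qed

lemma la2: "set xs \<subseteq> {1..m} \<Longrightarrow> (\<forall>k\<in>set xs. h k \<in> hval D (b k)) \<Longrightarrow>
   list_all2 (\<in>) (map h xs) (map (\<lambda>k. hval D (b k)) xs)"
  by (induct xs) auto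

lemma goods: "set xs \<subseteq> {1..m} \<Longrightarrow> \<forall>Y\<in>set (map (\<lambda>k. hval D (b k)) xs). good AA RR Y"
  using bgood by auto

lemma tval: "j \<in> {2..m-2} \<Longrightarrow> hval D (t j) = EE `` {concat (map wb [1..<j+1])}"
proof -
  assume j: "j \<in> {2..m-2}"
  have s: "set [1..<j+1] \<subseteq> {1..m}" using j by auto
  have "hval D (t j) = tprod G Ss rho i (map (\<lambda>k. hval D (b k)) [1..<j+1])" using tt j by blast
  also have "\<dots> = EE `` {concat (map wb [1..<j+1])}" unfolding tprod_def tEq_EE
    by (rule tprod_eq[OF la2[OF s] goods[OF s]]) (use wb s in auto)
  finally show ?thesis .
qed

lemma len_concat1: "(\<forall>k\<in>set xs. length (h k) \<le> 1) \<Longrightarrow> length (concat (map h xs)) \<le> length xs"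
  by (induct xs) auto

lemma len_concat_k0: "distinct xs \<Longrightarrow> (\<forall>k\<in>set xs. k \<noteq> k0 \<longrightarrow> length (h k) \<le> (1::nat)) \<Longrightarrow>
   length (h k0) \<le> M \<Longrightarrow> length (concat (map h xs)) \<le> length xs + M"
proof (induct xs)
  case Nil then show ?case by simp
next
  case (Cons x xs)
  show ?case
  proof (cases "x = k0")
    case True
    then have "\<forall>k\<in>set xs. length (h k) \<le> 1" using Cons.prems by auto
    then have "length (concat (map h xs)) \<le> length xs" by (rule len_concat1)
    then show ?thesis using True Cons.prems by simp
  next
    case False
    then show ?thesis using Cons by simp
  qed
qed

lemma upt_split3: "1 \<le> k \<Longrightarrow> k \<le> m \<Longrightarrow> [1..<m+1] = [1..<k] @ [k] @ [k+1..<m+1]"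
proof -
  assume k: "1 \<le> k" "k \<le> m"
  have "[1..<m+1] = [1..<k] @ [k..<m+1]" using upt_add_eq_append[of 1 k "m+1-k"] k by simp
  moreover have "[k..<m+1] = k # [k+1..<m+1]" using upt_conv_Cons[of k "m+1"] k by simp
  ultimately show ?thesis by simp
qed

lemma W: "(concat (map wb [1..<m+1]), []) \<in> EE"
proof -
  have xin: "concat (map wb [1..<m-1]) \<in> hval D (ein (m-2))"
  proof (cases "m = 3")
    case True
    then have "[1..<m-1] = [1]" "ein (m-2) = b 1" by (simp_all add: ein_def numeral_3_eq_3)
    then show ?thesis using wb[of 1] m3 by simp
  next
    case False
    then have j: "m - 2 \<in> {2..m-2}" using m3 by auto
    have "m - 2 \<noteq> 1" using False m3 by arith
    then have e: "ein (m-2) = t (m-2)" by (simp add: ein_def)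
    have ss: "set [1..<m-1] \<subseteq> {1..m}" by auto
    have "\<forall>k\<in>set [1..<m-1]. wb k \<in> hval D (b k)" using wb ss by blast
    then have l: "concat (map wb [1..<m-1]) \<in> lists (AA \<times> UNIV)"
      by (rule concat_lists[OF la2[OF ss] goods[OF ss]])
    have "m - 2 + 1 = m - 1" using m3 by simp
    then show ?thesis using tval[OF j] e peq_refl[OF l] by auto
  qed
  have "(concat (map wb [1..<m-1]) @ wb (m-1) @ wb m, []) \<in> EE"
    using last_rel xin wb[of "m-1"] wb[of m] m3 unfolding Rel3_def by auto
  moreover have "[1..<m+1] = [1..<m-1] @ [m-1, m]"
  proof -
    have "[1..<m+1] = [1..<m-1] @ [m-1..<m+1]" using upt_add_eq_append[of 1 "m-1" 2] m3 by simp
    moreover have "[m-1..<m+1] = [m-1, m]" using m3 upt_conv_Cons[of "m-1" "m+1"] upt_conv_Cons[of m "m+1"]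
      by simp
    ultimately show ?thesis by simp
  qed
  ultimately show ?thesis by simp
qed

lemma bounds: "(\<forall>k\<in>{1..m}. tlen (hval D (b k)) \<le> 2*m) \<and> (\<forall>j\<in>{2..m-2}. tlen (hval D (t j)) \<le> 2*m)"
proof -
  obtain k0 where k0: "k0 \<in> {1..m}" "\<forall>k\<in>{1..m}. k \<noteq> k0 \<longrightarrow> tlen (hval D (b k)) \<le> 1"
    using k0 by blast
  have wb1: "k \<in> {1..m} \<Longrightarrow> k \<noteq> k0 \<Longrightarrow> length (wb k) \<le> 1" for k using wb k0(2) by simp
  define P where "P = concat (map wb [1..<k0])"
  define Q where "Q = concat (map wb [k0+1..<m+1])"
  have "(P @ wb k0 @ Q, []) \<in> EE" using W upt_split3[of k0] k0(1) unfolding P_def Q_def by simp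
  then have V: "(wb k0, inv_sw P @ inv_sw Q) \<in> EE" by (rule peq_solve)
  have "\<forall>k\<in>set [1..<k0]. length (wb k) \<le> 1" using wb1 k0(1) by auto
  then have "length P \<le> length [1..<k0]" unfolding P_def by (rule len_concat1)
  then have lP: "length P \<le> k0 - 1" by simp
  have "\<forall>k\<in>set [k0+1..<m+1]. length (wb k) \<le> 1" using wb1 k0(1) by auto
  then have "length Q \<le> length [k0+1..<m+1]" unfolding Q_def by (rule len_concat1)
  then have lQ: "length Q \<le> m - k0" using length_upt[of "k0+1" "m+1"] by linarith
  define V where "V = inv_sw P @ inv_sw Q"
  have "length V = length P + length Q" by (simp add: V_def)
  then have lV: "length V \<le> m - 1" using lP lQ k0(1) by auto
  have Vin: "V \<in> hval D (b k0)" unfolding V_def by (rule good_mem[OF bgood[OF k0(1)] conjunct1[OF wb[OF k0(1)]] V])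
  define W' where "W' k = (if k = k0 then V else wb k)" for k
  have W'in: "k \<in> {1..m} \<Longrightarrow> W' k \<in> hval D (b k)" for k using Vin wb unfolding W'_def by simp
  have W'1: "k \<noteq> k0 \<Longrightarrow> k \<in> {1..m} \<Longrightarrow> length (W' k) \<le> 1" for k using wb1 unfolding W'_def by simp
  have b2: "tlen (hval D (b k)) \<le> 2*m" if k: "k \<in> {1..m}" for k
  proof (cases "k = k0")
    case True
    then show ?thesis using tlen_le[OF Vin] lV by simp
  next
    case False
    then show ?thesis using k0(2) k by auto
  qed
  have t2: "tlen (hval D (t j)) \<le> 2*m" if j: "j \<in> {2..m-2}" for j
  proof -
    have ss: "set [1..<j+1] \<subseteq> {1..m}" using j by auto
    have a1: "\<forall>k\<in>set [1..<j+1]. wb k \<in> hval D (b k)" using wb ss by blast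
    have a2: "\<forall>k\<in>set [1..<j+1]. W' k \<in> hval D (b k)" using W'in ss by blast
    have "(concat (map wb [1..<j+1]), concat (map W' [1..<j+1])) \<in> EE"
      by (rule concat_peq[OF la2[OF ss a1] la2[OF ss a2] goods[OF ss]])
    then have inn: "concat (map W' [1..<j+1]) \<in> hval D (t j)" using tval[OF j] by simp
    have dd: "distinct [1..<j+1]" by simp
    have h1: "\<forall>k\<in>set [1..<j+1]. k \<noteq> k0 \<longrightarrow> length (W' k) \<le> 1"
      using W'1 ss by blast
    have h2: "length (W' k0) \<le> m - 1" using lV unfolding W'_def by simp
    have "tlen (hval D (t j)) \<le> length (concat (map W' [1..<j+1]))" by (rule tlen_le[OF inn])
    also have "\<dots> \<le> length [1..<j+1] + (m - 1)"
      by (rule len_concat_k0[OF dd h1 h2])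
    also have "\<dots> \<le> 2*m" using j by auto
    finally show ?thesis .
  qed
  show ?thesis using b2 t2 by blast
qed

lemma cardC: "card C = m - 2"
  using Cf card_image[OF finj] by simp

lemma final: "c \<in> C \<Longrightarrow> d \<in> c \<Longrightarrow> cx (fst (dlab D d)) \<le> 6 * vk_area D"
proof -
  assume c: "c \<in> C" and d: "d \<in> c"
  obtain k where k: "k \<in> {1..m-2}" "c = f k" using c Cf by blast
  have dd: "d = ein k \<or> d = b (k+1) \<or> d = eout k" using fk[OF k(1)] d k(2) by simp
  have cxb: "cx (fst (dlab D (b k'))) \<le> 2*m" if "k' \<in> {1..m}" for k'
    using hval_good[OF bC[OF that] b_in_g[OF that]] bounds that by simp
  have cxt: "cx (fst (dlab D (t j))) \<le> 2*m" if j: "j \<in> {2..m-2}" for j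
  proof -
    have "j \<in> {1..m-2}" "ein j = t j" using j by (auto simp: ein_def)
    then have "t j \<in> f j" using fk[of j] by simp
    then show ?thesis using hval_good[OF fkC[OF \<open>j \<in> {1..m-2}\<close>]] bounds j by simp
  qed
  have "cx (fst (dlab D d)) \<le> 2*m"
  proof -
    { assume a: "d = ein k"
      have ?thesis
      proof (cases "k = 1")
        case True then show ?thesis using a cxb[of 1] m3 by (simp add: ein_def)
      next
        case False then show ?thesis using a cxt[of k] k(1) by (simp add: ein_def)
      qed }
    moreover
    { assume a: "d = b (k+1)"
      have "k+1 \<in> {1..m}" using k(1) by auto
      then have ?thesis using cxb[of "k+1"] a by simp }
    moreover
    { assume a: "d = eout k"
      have ?thesis
      proof (cases "k = m - 2")
        case True then show ?thesis using a cxb[of m] m3 by (simp add: eout_def)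
      next
        case False
        then have j: "k+1 \<in> {2..m-2}" using k(1) by auto
        then have "t (k+1) \<in> darts D" using tt by blast
        then have "cx (fst (dlab D (alph D (t (k+1))))) = cx (fst (dlab D (t (k+1))))" using labs by simp
        then show ?thesis using a False cxt[OF j] by (simp add: eout_def)
      qed }
    ultimately show ?thesis using dd by blast
  qed
  moreover have "2*m \<le> 6 * (m-2)" using m3 by simp
  moreover have "m - 2 \<le> vk_area D" unfolding vk_area_def using cardC card_mono[OF fin_cells Csub] by simp
  ultimately show ?thesis by linarith
qed

end

lemma fin_cells_pm: "planar_map D \<Longrightarrow> finite (cells D)"
proof -
  assume pm: "planar_map D"
  have "dfaces D = (\<lambda>d. dorb (phi D) d) ` darts D" unfolding dfaces_def by auto
  then have "finite (dfaces D)" using pm unfolding planar_map_def by simp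
  then show ?thesis unfolding cells_def by simp
qed

lemma tclass1: "s \<in> Ss j \<Longrightarrow> tlen (tclass G Ss rho j [(s, False)]) \<le> 1"
proof -
  assume s: "s \<in> Ss j"
  have "[(s,False)] \<in> lists (Ss j \<times> UNIV)" using s by simp
  then have "([(s,False)], [(s,False)]) \<in> pres_eq (Ss j) (tRel G Ss rho j)" by (rule peq_refl)
  then have "[(s,False)] \<in> tclass G Ss rho j [(s, False)]" by (simp add: tclass_def tEq_def)
  then show ?thesis using tlen_le[of "[(s,False)]"] by fastforce
qed

lemma cell_bound:
  assumes vk: "vk_diagram G S R Ss rho n D"
    and cl: "\<forall>i\<in>{1..n}. \<forall>C\<in>clusters G Ss rho D i.
           simply_conn D C \<and> \<not> complicated D C \<and> standardly_filled G Ss rho D i C"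
    and c: "c \<in> cells D" and d: "d \<in> c"
  shows "cx (fst (dlab D d)) \<le> 6 * vk_area D"
proof -
  have pm: "planar_map D" using vk by (simp add: vk_diagram_def)
  have ar: "1 \<le> vk_area D" unfolding vk_area_def using fin_cells_pm[OF pm] c
    by (metis One_nat_def Suc_leI card_gt_0_iff empty_iff)
  obtain r where r: "r \<in> XRel G R Ss rho n" "reads D c r" using vk c unfolding vk_diagram_def by blast
  have inr: "fst (dlab D d) \<in> set r" using cell_uniform[OF pm c r(2)] d by blast
  show ?thesis
  proof (cases "r \<in> Rprime G R Ss rho n")
    case True
    have "cx (fst (dlab D d)) \<le> 1"
    proof -
      { fix r0 assume "r = map SL r0"
        then have ?thesis using inr by (auto simp: cx_def) }
      moreover
      { fix j s assume a: "r = [HL j (tclass G Ss rho j [(s, False)]), SL s]" "s \<in> Ss j"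
        then have ?thesis using inr tclass1[of s Ss j G rho, OF a(2)] by (auto simp: cx_def) }
      ultimately show ?thesis using True unfolding Rprime_def by blast
    qed
    then show ?thesis using ar by linarith
  next
    case False
    then have "r \<in> (\<Union>j\<in>{1..n}. HRel G Ss rho j)" using r(1) unfolding XRel_def by blast
    then obtain j where j: "j \<in> {1..n}" "r \<in> HRel G Ss rho j" by blast
    have hc: "htype G Ss rho D j c" unfolding htype_def using j r(2) by blast
    define C where "C = {c'. (c,c') \<in> (cadj G Ss rho D j)\<^sup>*}"
    have CC: "C \<in> clusters G Ss rho D j" unfolding clusters_def C_def using c hc by blast
    have nc: "\<not> complicated D C" and sf: "standardly_filled G Ss rho D j C" using cl j(1) CC by blast+
    have Cp: "c' \<in> cells D \<and> htype G Ss rho D j c'" if "(c,c') \<in> (cadj G Ss rho D j)\<^sup>*" for c'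
      using that
    proof induct
      case base then show ?case using c hc by simp
    next
      case (step y z) then show ?case unfolding cadj_def by blast
    qed
    have Csub: "C \<subseteq> cells D" and Chty: "\<forall>c\<in>C. htype G Ss rho D j c" using Cp unfolding C_def by auto
    have Ccl: "\<forall>c1\<in>C. \<forall>c'. (c1,c') \<in> cadj G Ss rho D j \<longrightarrow> c' \<in> C"
      unfolding C_def by (auto intro: rtrancl_into_rtrancl)
    obtain m b t f where sfu: "3 \<le> m \<and> inj_on f {1..m-2} \<and> C = f ` {1..m-2} \<and>
      (\<forall>k\<in>{1..m}. b k \<in> darts D) \<and>
      (\<forall>jj\<in>{2..m-2}. t jj \<in> darts D \<and>
          hval D (t jj) = tprod G Ss rho j (map (\<lambda>k. hval D (b k)) [1..<jj+1])) \<and>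
      (\<forall>k\<in>{1..m-2}.
         let ein = (if k = 1 then b 1 else t k);
             eout = (if k = m - 2 then b m else alph D (t (k+1)))
         in card (f k) = 3 \<and> f k = dorb (phi D) ein \<and>
            phi D ein = b (k+1) \<and> phi D (b (k+1)) = eout \<and> phi D eout = ein) \<and>
      {{b k, alph D (b k)} | k. k \<in> {1..m}} = bdC D C"
      using sf unfolding standardly_filled_def by (elim exE) (rule that)
    interpret K: clus G S R Ss rho n D j C m b t f
    proof (unfold_locales)
      show "vk_diagram G S R Ss rho n D" by (rule vk)
      show "j \<in> {1..n}" by (rule j(1))
      show "C \<subseteq> cells D" by (rule Csub)
      show "\<forall>c\<in>C. htype G Ss rho D j c" by (rule Chty)
      show "\<forall>c\<in>C. \<forall>c'. (c, c') \<in> cadj G Ss rho D j \<longrightarrow> c' \<in> C" by (rule Ccl)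
      show "\<not> complicated D C" by (rule nc)
    qed (insert sfu, (elim conjE), assumption)+
    have "c \<in> C" unfolding C_def by simp
    then show ?thesis using K.final d by blast
  qed
qed

theorem lemma2p6:
  fixes G :: "('g, 'b) monoid_scheme" and S :: "'g set" and R :: "'g list set"
    and n :: nat and Ss :: "nat \<Rightarrow> 'g set" and H :: "nat \<Rightarrow> 'g set" and rho :: enat
    and D :: "('d, 'g) vkdiag"
  assumes "finite_presentation G S R"
    and "\<forall>i\<in>{1..n}. subgroup (H i) G \<and> Ss i \<subseteq> S \<and> finite (Ss i) \<and> sym_subset G (Ss i)
                    \<and> generate G (Ss i) = H i"
    and "vk_diagram G S R Ss rho n D"
    and "\<forall>i\<in>{1..n}. \<forall>C\<in>clusters G Ss rho D i.
           simply_conn D C \<and> \<not> complicated D C \<and> standardly_filled G Ss rho D i C"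
  shows "thick_norm D \<le> 6 * vk_area D"
proof -
  have pm: "planar_map D" using assms(3) by (simp add: vk_diagram_def)
  define SS where "SS = {cx (fst (dlab D d)) | d. d \<in> darts D \<and> {d, alph D d} \<inter> \<Union>(cells D) \<noteq> {}}"
  have fin: "finite SS"
  proof -
    have "SS \<subseteq> (\<lambda>d. cx (fst (dlab D d))) ` darts D" unfolding SS_def by blast
    moreover have "finite (darts D)" using pm by (simp add: planar_map_def)
    ultimately show ?thesis using finite_subset by blast
  qed
  have bnd: "x \<le> 6 * vk_area D" if x: "x \<in> SS" for x
  proof -
    obtain d where d: "x = cx (fst (dlab D d))" "d \<in> darts D" "{d, alph D d} \<inter> \<Union>(cells D) \<noteq> {}"
      using x unfolding SS_def by blast
    have la: "fst (dlab D (alph D d)) = fst (dlab D d)" using assms(3) d(2) by (simp add: vk_diagram_def)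
    obtain c e where ce: "c \<in> cells D" "e \<in> c" "e = d \<or> e = alph D d" using d(3) by blast
    have "cx (fst (dlab D e)) \<le> 6 * vk_area D" by (rule cell_bound[OF assms(3,4) ce(1,2)])
    then show ?thesis using ce(3) la d(1) by auto
  qed
  show ?thesis unfolding thick_norm_def SS_def[symmetric]
    using fin bnd by (intro Max.boundedI) auto
qed


end
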